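(* Let $n\ge 2$, $\kappa\ge1$, and let $G\in\mathcal G_{[n;\kappa]}$ be a skew-symmetric game with payoff structure vectors $V_1^c,\dots,V_n^c\in\mathbb R^{\kappa^n}$. Then $$V_i^c=-V_1^c\ltimes W_{[\kappa^{i-2},\kappa]}\ltimes W_{[\kappa,\kappa^{i-1}]},\qquad i=2,\dots,n.$$
   Context: Semi-tensor product: for $A\in\mathbb R^{m\times n}$, $B\in\mathbb R^{p\times q}$ and $t=\mathrm{lcm}(n,p)$, $A\ltimes B=(A\otimes I_{t/n})(B\otimes I_{t/p})$; it is associative and coincides with the Kronecker product on column vectors. Swap matrix: $W_{[m,n]}\in\mathbb R^{mn\times mn}$ is the permutation matrix with $W_{[m,n]}(X\otimes Y)=Y\otimes X$ for all $X\in\mathbb R^m$, $Y\in\mathbb R^n$ (so $W_{[1,n]}=W_{[n,1]}=I_n$). A finite game $G\in\mathcal G_{[n;\kappa]}$ has players $\{1,\dots,n\}$, each with strategy set $\{1,\dots,\kappa\}$, strategy $j$ identified with $\delta_\kappa^j$ (the $j$-th column of $I_\kappa$), and payoffs $c_i$; $V_i^c\in\mathbb R^{\kappa^n}$ is the unique row vector with $c_i(x_1,\dots,x_n)=V_i^c\ltimes x_1\ltimes\cdots\ltimes x_n$ for all $x_j\in\{\delta_\kappa^1,\dots,\delta_\kappa^\kappa\}$. $G$ is skew-symmetric if for every permutation $\sigma\in\mathbf S_n$, every $i$ and every profile, $c_i(x_1,\dots,x_n)=\mathrm{sgn}(\sigma)\,c_{\sigma(i)}(x_{\sigma^{-1}(1)},\dots,x_{\sigma^{-1}(n)})$.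 *)

theory Defs
  imports "Jordan_Normal_Form.Matrix" "HOL-Combinatorics.Permutations"
begin

definition kron :: "real mat \<Rightarrow> real mat \<Rightarrow> real mat" where
  "kron A B = mat (dim_row A * dim_row B) (dim_col A * dim_col B)
     (\<lambda>(i, j). A $$ (i div dim_row B, j div dim_col B) * B $$ (i mod dim_row B, j mod dim_col B))"

definition stp :: "real mat \<Rightarrow> real mat \<Rightarrow> real mat" where
  "stp A B = (let n = dim_col A; p = dim_row B; t = lcm n p in
     kron A (1\<^sub>m (t div n)) * kron B (1\<^sub>m (t div p)))"

text \<open>Swap matrix W_[m,n]: the mn x mn permutation matrix with W (X \<otimes> Y) = Y \<otimes> X.\<close>
definition swap_mat :: "nat \<Rightarrow> nat \<Rightarrow> real mat" where
  "swap_mat m n = mat (m * n) (m * n) (\<lambda>(r, c). if r = (c mod n) * m + c div n then 1 else 0)"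

text \<open>delta_k^j: the j-th column of I_k (j counted from 1).\<close>
definition delta :: "nat \<Rightarrow> nat \<Rightarrow> real mat" where
  "delta k j = mat k 1 (\<lambda>(r, _). if r = j - 1 then 1 else 0)"

definition stp_profile :: "real mat \<Rightarrow> nat \<Rightarrow> nat list \<Rightarrow> real mat" where
  "stp_profile V k xs = foldl stp V (map (delta k) xs)"

definition profiles :: "nat \<Rightarrow> nat \<Rightarrow> nat list set" where
  "profiles n k = {xs. length xs = n \<and> set xs \<subseteq> {1..k}}"

text \<open>Payoffs c i xs for players i \<in> {1..n}; xs ! (j-1) is player j's strategy.
  Skew-symmetry: c_i(x) = sgn(sigma) c_{sigma i}(x_{sigma^-1 1}, ..., x_{sigma^-1 n}).\<close>
definition skew_symmetric :: "nat \<Rightarrow> nat \<Rightarrow> (nat \<Rightarrow> nat list \<Rightarrow> real) \<Rightarrow> bool" where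
  "skew_symmetric n k c \<longleftrightarrow>
     (\<forall>s. s permutes {1..n} \<longrightarrow>
        (\<forall>i\<in>{1..n}. \<forall>xs\<in>profiles n k.
           c i xs = of_int (sign s) * c (s i) (map (\<lambda>j. xs ! (inv_into UNIV s j - 1)) [1..<n+1])))"

end

theory Submission
  imports Defs
begin

fun idx :: "nat \<Rightarrow> nat list \<Rightarrow> nat" where
  "idx k [] = 0"
| "idx k (x # xs) = (x - 1) * k ^ length xs + idx k xs"

lemma idx_bound: "set xs \<subseteq> {1..k} \<Longrightarrow> idx k xs < k ^ length xs"
proof (induction xs)
  case Nil then show ?case by simp
next
  case (Cons x xs)
  then have x: "1 \<le> x" "x \<le> k" and ih: "idx k xs < k ^ length xs" by auto
  have "(x - 1) * k ^ length xs + idx k xs < (x - 1) * k ^ length xs + k ^ length xs"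
    using ih by simp
  also have "\<dots> = x * k ^ length xs" using x by (cases x) auto
  also have "\<dots> \<le> k * k ^ length xs" using x by simp
  finally show ?case by simp
qed

lemma idx_split: "idx k (a # mid @ b # rest) =
   (((a - 1) * k ^ length mid + idx k mid) * k + (b - 1)) * k ^ length rest + idx k rest"
proof -
  have ap: "idx k (xs @ ys) = idx k xs * k ^ length ys + idx k ys" for xs ys
    by (induction xs) (simp_all add: algebra_simps power_add)
  show ?thesis by (simp add: ap algebra_simps power_add)
qed

fun dig :: "nat \<Rightarrow> nat \<Rightarrow> nat \<Rightarrow> nat list" where
  "dig k 0 v = []"
| "dig k (Suc m) v = (v div k ^ m + 1) # dig k m (v mod k ^ m)"

lemma dig_props: "k \<ge> 1 \<Longrightarrow> v < k ^ m \<Longrightarrow>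
   length (dig k m v) = m \<and> set (dig k m v) \<subseteq> {1..k} \<and> idx k (dig k m v) = v"
proof (induction m arbitrary: v)
  case 0 then show ?case by simp
next
  case (Suc m)
  have kp: "k ^ m > 0" using Suc.prems by simp
  have "v mod k ^ m < k ^ m" using kp by simp
  note ih = Suc.IH[OF Suc.prems(1) this]
  have "v div k ^ m < k" using Suc.prems(2)
    using less_mult_imp_div_less[of v k "k ^ m"] by (simp add: mult.commute)
  then show ?case using ih by (simp add: mult.commute)
qed

lemma sum_pick:
  fixes g :: "nat \<Rightarrow> real"
  assumes "l0 < N"
  shows "(\<Sum>l\<in>{0..<N}. g l * (if l = l0 then 1 else 0)) = g l0"
  using assms by (simp add: if_distrib cong: if_cong)

lemma dm:
  fixes Q :: nat
  assumes "r < Q"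
  shows "(a * Q + r) div Q = a" "(a * Q + r) mod Q = r"
  using assms by simp_all

lemma kron_one1:
  assumes "dim_row V = 1"
  shows "kron V (1\<^sub>m 1) = V"
  using assms by (intro eq_matI) (auto simp: kron_def)

lemma stp_perm:
  assumes V: "dim_row V = 1" "dim_col V = P * Q" and P: "P > 0" and Qp0: "Q > 0"
    and f: "\<forall>c<P. f c < P"
  shows "stp V (mat P P (\<lambda>(r, c). if r = f c then 1 else 0)) =
         mat 1 (P * Q) (\<lambda>(_, j). V $$ (0, f (j div Q) * Q + j mod Q))"
    (is "stp V ?W = ?R")
proof -
  have l: "lcm (P * Q) P = P * Q" by simp
  have "stp V ?W = kron V (1\<^sub>m 1) * kron ?W (1\<^sub>m Q)"
    unfolding stp_def Let_def using V P l Qp0 by simp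
  also have "\<dots> = V * kron ?W (1\<^sub>m Q)" using kron_one1 V by simp
  also have "\<dots> = ?R"
  proof (rule eq_matI)
    show "dim_row (V * kron ?W (1\<^sub>m Q)) = dim_row ?R" using V by simp
    show "dim_col (V * kron ?W (1\<^sub>m Q)) = dim_col ?R" by (simp add: kron_def)
    fix i j assume i: "i < dim_row ?R" and j: "j < dim_col ?R"
    then have i0: "i = 0" and jb: "j < P * Q" by auto
    have Qp: "Q > 0" using jb by (cases Q) auto
    have jd: "j div Q < P" using jb by (simp add: div_less_iff_less_mult Qp)
    define l0 where "l0 = f (j div Q) * Q + j mod Q"
    have fb: "f (j div Q) < P" using f jd by simp
    have l0b: "l0 < P * Q"
    proof -
      have "l0 < f (j div Q) * Q + Q" unfolding l0_def using Qp by simp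
      also have "\<dots> = (f (j div Q) + 1) * Q" by simp
      also have "\<dots> \<le> P * Q" using fb by (intro mult_right_mono) auto
      finally show ?thesis .
    qed
    have "(V * kron ?W (1\<^sub>m Q)) $$ (i, j) =
        (\<Sum>l\<in>{0..<P*Q}. V $$ (0, l) * (if l = l0 then 1 else 0))"
    proof -
      have "(V * kron ?W (1\<^sub>m Q)) $$ (i, j) =
          (\<Sum>l\<in>{0..<P*Q}. V $$ (0, l) * (kron ?W (1\<^sub>m Q)) $$ (l, j))"
        using i0 V jb by (simp add: kron_def scalar_prod_def)
      also have "\<dots> = (\<Sum>l\<in>{0..<P*Q}. V $$ (0, l) * (if l = l0 then 1 else 0))"
      proof (rule sum.cong)
        fix l assume "l \<in> {0..<P*Q}"
        then have lb: "l < P * Q" by simp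
        have ld: "l div Q < P" using lb by (simp add: div_less_iff_less_mult Qp)
        have eq: "(l div Q = f (j div Q) \<and> l mod Q = j mod Q) = (l = l0)"
          unfolding l0_def using Qp
          by (metis div_mult_mod_eq dm(1) dm(2) mod_less_divisor)
        have "kron ?W (1\<^sub>m Q) $$ (l, j) = (if l = l0 then 1 else 0)"
          using lb jb ld jd Qp eq by (auto simp: kron_def)
        then show "V $$ (0, l) * kron ?W (1\<^sub>m Q) $$ (l, j) =
            V $$ (0, l) * (if l = l0 then 1 else 0)" by simp
      qed simp
      finally show ?thesis .
    qed
    also have "\<dots> = V $$ (0, l0)" by (rule sum_pick[OF l0b])
    finally show "(V * kron ?W (1\<^sub>m Q)) $$ (i, j) = ?R $$ (i, j)"
      using i0 jb unfolding l0_def by simp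
  qed
  finally show ?thesis .
qed

lemma stp_delta:
  assumes V: "dim_row V = 1" "dim_col V = k * M" and x: "1 \<le> x" "x \<le> k" and Mp0: "M > 0"
  shows "stp V (delta k x) = mat 1 M (\<lambda>(_, j). V $$ (0, (x - 1) * M + j))"
    (is "_ = ?R")
proof -
  have kp: "k > 0" using x by simp
  have "stp V (delta k x) = kron V (1\<^sub>m 1) * kron (delta k x) (1\<^sub>m M)"
    unfolding stp_def Let_def using V kp Mp0 by (simp add: delta_def)
  also have "\<dots> = V * kron (delta k x) (1\<^sub>m M)" using kron_one1 V by simp
  also have "\<dots> = ?R"
  proof (rule eq_matI)
    show "dim_row (V * kron (delta k x) (1\<^sub>m M)) = dim_row ?R" using V by simp
    show "dim_col (V * kron (delta k x) (1\<^sub>m M)) = dim_col ?R" by (simp add: kron_def delta_def)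
    fix i j assume i: "i < dim_row ?R" and j: "j < dim_col ?R"
    then have i0: "i = 0" and jb: "j < M" by auto
    define l0 where "l0 = (x - 1) * M + j"
    have l0b: "l0 < k * M"
    proof -
      have "l0 < (x - 1) * M + M" unfolding l0_def using jb by simp
      also have "\<dots> = x * M" using x by (cases x) auto
      also have "\<dots> \<le> k * M" using x by simp
      finally show ?thesis .
    qed
    have "(V * kron (delta k x) (1\<^sub>m M)) $$ (i, j) =
        (\<Sum>l\<in>{0..<k*M}. V $$ (0, l) * (kron (delta k x) (1\<^sub>m M)) $$ (l, j))"
      using i0 V jb by (simp add: kron_def scalar_prod_def delta_def)
    also have "\<dots> = (\<Sum>l\<in>{0..<k*M}. V $$ (0, l) * (if l = l0 then 1 else 0))"
    proof (rule sum.cong)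
      fix l assume "l \<in> {0..<k*M}"
      then have lb: "l < k * M" by simp
      have Mp: "M > 0" using jb by simp
      have ld: "l div M < k" using lb by (simp add: div_less_iff_less_mult Mp)
      have eq: "(l div M = x - 1 \<and> l mod M = j) = (l = l0)"
        unfolding l0_def using jb
        by (metis div_mult_mod_eq dm(1) dm(2))
      have "kron (delta k x) (1\<^sub>m M) $$ (l, j) = (if l = l0 then 1 else 0)"
        using lb jb ld eq by (auto simp: kron_def delta_def)
      then show "V $$ (0, l) * kron (delta k x) (1\<^sub>m M) $$ (l, j) =
          V $$ (0, l) * (if l = l0 then 1 else 0)" by simp
    qed simp
    also have "\<dots> = V $$ (0, l0)" by (rule sum_pick[OF l0b])
    finally show "(V * kron (delta k x) (1\<^sub>m M)) $$ (i, j) = ?R $$ (i, j)"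
      using i0 jb unfolding l0_def by simp
  qed
  finally show ?thesis .
qed

lemma profile_val:
  assumes "dim_row V = 1" "dim_col V = k ^ length xs" "set xs \<subseteq> {1..k}"
  shows "stp_profile V k xs $$ (0, 0) = V $$ (0, idx k xs)"
  using assms
proof (induction xs arbitrary: V)
  case Nil then show ?case by (simp add: stp_profile_def)
next
  case (Cons x xs)
  have x: "1 \<le> x" "x \<le> k" using Cons.prems by auto
  define V' where "V' = stp V (delta k x)"
  have V': "V' = mat 1 (k ^ length xs) (\<lambda>(_, j). V $$ (0, (x - 1) * k ^ length xs + j))"
    unfolding V'_def
  proof (rule stp_delta)
    show "dim_row V = 1" using Cons.prems by simp
    show "dim_col V = k * k ^ length xs" using Cons.prems by simp
    show "k ^ length xs > 0" using x by simp
  qed (use x in auto)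
  have "stp_profile V k (x # xs) = stp_profile V' k xs"
    by (simp add: stp_profile_def V'_def)
  also have "\<dots> $$ (0, 0) = V' $$ (0, idx k xs)"
    using Cons.IH[of V'] Cons.prems V' by simp
  also have "\<dots> = V $$ (0, idx k (x # xs))"
    using V' idx_bound[of xs k] Cons.prems by simp
  finally show ?case .
qed

lemma split4:
  assumes "length ys = n" "2 \<le> i" "i \<le> n"
  shows "\<exists>a mid b rest. ys = a # mid @ b # rest \<and> length mid = i - 2 \<and> length rest = n - i"
proof -
  obtain a t where ys: "ys = a # t" using assms by (cases ys) auto
  have lt: "length t = n - 1" using ys assms by simp
  have "i - 2 < length t" using lt assms by simp
  then have "t = take (i - 2) t @ t ! (i - 2) # drop (Suc (i - 2)) t"
    by (simp add: id_take_nth_drop)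
  moreover have "length (take (i - 2) t) = i - 2" using lt assms by simp
  moreover have "length (drop (Suc (i - 2)) t) = n - i" using lt assms by simp
  ultimately show ?thesis using ys by blast
qed

theorem proposition3p8:
  fixes n k :: nat and c :: "nat \<Rightarrow> nat list \<Rightarrow> real" and V :: "nat \<Rightarrow> real mat"
  assumes "n \<ge> 2" and "k \<ge> 1"
    and "skew_symmetric n k c"
    and "\<forall>i\<in>{1..n}. dim_row (V i) = 1 \<and> dim_col (V i) = k ^ n"
    and "\<forall>i\<in>{1..n}. \<forall>xs\<in>profiles n k. c i xs = stp_profile (V i) k xs $$ (0, 0)"
  shows "\<forall>i\<in>{2..n}. V i = - stp (stp (V 1) (swap_mat (k ^ (i - 2)) k)) (swap_mat k (k ^ (i - 1)))"
proof
  fix i assume iI: "i \<in> {2..n}"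
  then have i2: "2 \<le> i" and iN: "i \<le> n" by auto
  have kp: "k > 0" using assms(2) by simp
  have V1: "dim_row (V 1) = 1" "dim_col (V 1) = k ^ n" using assms(1,4) by auto
  have Vi: "dim_row (V i) = 1" "dim_col (V i) = k ^ n" using assms(4) iI by auto
  define K2 where "K2 = k ^ (i - 2)"
  define Q2 where "Q2 = k ^ (n - i)"
  have K2p: "K2 > 0" and Q2p: "Q2 > 0" using kp by (simp_all add: K2_def Q2_def)
  have e1: "k ^ n = (K2 * k) * (k * Q2)"
  proof -
    have nn: "n = (i - 2) + 1 + (1 + (n - i))" using i2 iN by simp
    have "k ^ ((i - 2) + 1 + (1 + (n - i))) = (K2 * k) * (k * Q2)"
      unfolding K2_def Q2_def by (simp only: power_add power_one_right)
    then show ?thesis using nn by metis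
  qed
  have e2: "k ^ n = (k * (K2 * k)) * Q2" using e1 by (simp add: ac_simps)
  have sw1: "swap_mat (k ^ (i - 2)) k = mat (K2 * k) (K2 * k)
      (\<lambda>(r, c). if r = (\<lambda>c. (c mod k) * K2 + c div k) c then 1 else 0)"
    unfolding swap_mat_def K2_def by simp
  have ki1: "k ^ (i - 1) = K2 * k" unfolding K2_def using i2
    by (metis Suc_diff_Suc Suc_1 diff_Suc_eq_diff_pred le_eq_less_or_eq less_eq_Suc_le
        power_Suc2 Suc_le_lessD numeral_2_eq_2)
  have sw2: "swap_mat k (k ^ (i - 1)) = mat (k * (K2 * k)) (k * (K2 * k))
      (\<lambda>(r, c). if r = (\<lambda>c. (c mod (K2 * k)) * k + c div (K2 * k)) c then 1 else 0)"
    unfolding swap_mat_def ki1 by simp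
  have f1b: "\<forall>c<K2 * k. (c mod k) * K2 + c div k < K2 * k"
  proof (intro allI impI)
    fix c assume c: "c < K2 * k"
    have "c div k < K2" using c kp by (simp add: div_less_iff_less_mult)
    moreover have "c mod k < k" using kp by simp
    ultimately have "(c mod k) * K2 + c div k < (c mod k) * K2 + K2" by simp
    also have "\<dots> = (c mod k + 1) * K2" by simp
    also have "\<dots> \<le> k * K2" using \<open>c mod k < k\<close> by (intro mult_right_mono) auto
    finally show "(c mod k) * K2 + c div k < K2 * k" by (simp add: mult.commute)
  qed
  have f2b: "\<forall>c<k * (K2 * k). (c mod (K2 * k)) * k + c div (K2 * k) < k * (K2 * k)"
  proof (intro allI impI)
    fix c assume c: "c < k * (K2 * k)"
    have pp: "K2 * k > 0" using K2p kp by simp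
    have "c div (K2 * k) < k" using c pp by (simp add: div_less_iff_less_mult mult.commute)
    moreover have "c mod (K2 * k) < K2 * k" using pp by simp
    ultimately have "(c mod (K2 * k)) * k + c div (K2 * k) < (c mod (K2 * k)) * k + k" by simp
    also have "\<dots> = (c mod (K2 * k) + 1) * k" by simp
    also have "\<dots> \<le> (K2 * k) * k" using \<open>c mod (K2 * k) < K2 * k\<close>
      by (intro mult_right_mono) auto
    finally show "(c mod (K2 * k)) * k + c div (K2 * k) < k * (K2 * k)" by (simp add: mult.commute)
  qed
  define S where "S = stp (V 1) (swap_mat (k ^ (i - 2)) k)"
  have S: "S = mat 1 ((K2 * k) * (k * Q2)) (\<lambda>(_, j). V 1 $$ (0,
      ((j div (k * Q2)) mod k * K2 + (j div (k * Q2)) div k) * (k * Q2) + j mod (k * Q2)))"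
    unfolding S_def sw1 using stp_perm[OF V1(1) _ _ _ f1b, of "k * Q2"] V1(2) e1 K2p kp Q2p
    by simp
  define R where "R = stp S (swap_mat k (k ^ (i - 1)))"
  have SR: "dim_row S = 1" "dim_col S = (k * (K2 * k)) * Q2" using S e1 e2 by simp_all
  have R: "R = mat 1 ((k * (K2 * k)) * Q2) (\<lambda>(_, j). S $$ (0,
      ((j div Q2) mod (K2 * k) * k + (j div Q2) div (K2 * k)) * Q2 + j mod Q2))"
    unfolding R_def sw2 using stp_perm[OF SR _ Q2p f2b] K2p kp by simp
  show "V i = - stp (stp (V 1) (swap_mat (k ^ (i - 2)) k)) (swap_mat k (k ^ (i - 1)))"
    unfolding S_def[symmetric] R_def[symmetric]
  proof (rule eq_matI)
    show "dim_row (V i) = dim_row (- R)" using Vi R by simp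
    show "dim_col (V i) = dim_col (- R)" using Vi R e2 by simp
    fix r j assume r: "r < dim_row (- R)" and j: "j < dim_col (- R)"
    then have r0: "r = 0" and jb: "j < k ^ n" using R e2 by auto
    define ys where "ys = dig k n j"
    have ysp: "length ys = n" "set ys \<subseteq> {1..k}" "idx k ys = j"
      using dig_props[OF assms(2) jb] unfolding ys_def by auto
    obtain a mid b rest where ys: "ys = a # mid @ b # rest"
      and lm: "length mid = i - 2" and lr: "length rest = n - i"
      using split4[OF ysp(1) i2 iN] by blast
    define zs where "zs = b # mid @ a # rest"
    have ab: "1 \<le> a" "a \<le> k" "1 \<le> b" "b \<le> k" using ysp(2) ys by auto
    have smid: "set mid \<subseteq> {1..k}" and srest: "set rest \<subseteq> {1..k}" using ysp(2) ys by auto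
    define A where "A = a - 1"
    define B where "B = idx k mid"
    define C where "C = b - 1"
    define D where "D = idx k rest"
    have A: "A < k" and C: "C < k" using ab unfolding A_def C_def by auto
    have B: "B < K2" using idx_bound[OF smid] lm unfolding B_def K2_def by simp
    have D: "D < Q2" using idx_bound[OF srest] lr unfolding D_def Q2_def by simp
    have jeq: "j = ((A * K2 + B) * k + C) * Q2 + D"
      using ysp(3) unfolding ys idx_split A_def B_def C_def D_def K2_def Q2_def lm lr by simp
    have zeq: "idx k zs = ((C * K2 + B) * k + A) * Q2 + D"
      unfolding zs_def idx_split A_def B_def C_def D_def K2_def Q2_def lm lr by simp
    have zsp: "zs \<in> profiles n k" using ysp ys lm lr ab smid srest
      unfolding zs_def profiles_def by auto
    have ysp2: "ys \<in> profiles n k" using ysp unfolding profiles_def by auto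
    define s where "s = Transposition.transpose (1::nat) i"
    have sp: "s permutes {1..n}" unfolding s_def using i2 iN by (intro permutes_swap_id) auto
    have sg: "sign s = -1" unfolding s_def using i2 by (simp add: sign_swap_id)
    have si: "s i = 1" unfolding s_def by simp
    have invs: "inv_into UNIV s = s" unfolding s_def by simp
    have mapeq: "map (\<lambda>j. ys ! (inv_into UNIV s j - 1)) [1..<n+1] = zs"
    proof (rule nth_equalityI)
      show "length (map (\<lambda>j. ys ! (inv_into UNIV s j - 1)) [1..<n+1]) = length zs"
        using ysp(1) ys unfolding zs_def by simp
      fix p assume "p < length (map (\<lambda>j. ys ! (inv_into UNIV s j - 1)) [1..<n+1])"
      then have p: "p < n" by (simp del: upt_Suc)
      have lhs: "map (\<lambda>j. ys ! (inv_into UNIV s j - 1)) [1..<n+1] ! p = ys ! (s (p + 1) - 1)"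
        using p invs by (simp del: upt_Suc)
      show "map (\<lambda>j. ys ! (inv_into UNIV s j - 1)) [1..<n+1] ! p = zs ! p"
        unfolding lhs
      proof -
        have im: "i - 1 = Suc (length mid)" using lm i2 by simp
        have yb: "ys ! (i - 1) = b" unfolding ys im by (simp add: nth_append)
        have za: "zs ! (i - 1) = a" unfolding zs_def im by (simp add: nth_append)
        show "ys ! (s (p + 1) - 1) = zs ! p"
        proof (cases "p = 0")
          case True
          then have "s (p + 1) = i" unfolding s_def by simp
          then show ?thesis using True yb unfolding zs_def ys by simp
        next
          case False
          show ?thesis
          proof (cases "p = i - 1")
            case True
            then have "s (p + 1) = 1" unfolding s_def using i2 by simp
            then show ?thesis using True za unfolding ys by simp
          next
            case F2: False
            then have sp1: "s (p + 1) = p + 1" unfolding s_def using False i2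
              by (simp add: transpose_def)
            obtain q where q: "p = Suc q" using False by (cases p) auto
            have "ys ! p = zs ! p"
            proof (cases "q < length mid")
              case True
              then show ?thesis unfolding ys zs_def q by (simp add: nth_append)
            next
              case False
              then have "q > length mid" using F2 q im by simp
              then obtain r where r: "q - length mid = Suc r" by (cases "q - length mid") auto
              then show ?thesis using False unfolding ys zs_def q by (simp add: nth_append)
            qed
            then show ?thesis using sp1 by simp
          qed
        qed
      qed
    qed
    have "c i ys = of_int (sign s) * c (s i) (map (\<lambda>j. ys ! (inv_into UNIV s j - 1)) [1..<n+1])"
      using assms(3) sp iI ysp2 unfolding skew_symmetric_def by auto
    then have cyz: "c i ys = - c 1 zs" using sg si mapeq by simp
    have ci: "c i ys = V i $$ (0, j)"
      using assms(5) iI ysp2 profile_val[of "V i" k ys] Vi ysp by auto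
    have c1: "c 1 zs = V 1 $$ (0, idx k zs)"
      using assms(5) assms(1) zsp profile_val[of "V 1" k zs] V1 zsp
      unfolding profiles_def by auto
    have jd: "j div Q2 = (A * K2 + B) * k + C" "j mod Q2 = D"
      unfolding jeq using D by simp_all
    have pp: "K2 * k > 0" using K2p kp by simp
    have c2: "(A * K2 + B) * k + C = A * (K2 * k) + (B * k + C)" by (simp add: algebra_simps)
    have bkc: "B * k + C < K2 * k"
    proof -
      have "B * k + C < B * k + k" using C by simp
      also have "\<dots> = (B + 1) * k" by simp
      also have "\<dots> \<le> K2 * k" using B by (intro mult_right_mono) auto
      finally show ?thesis .
    qed
    have m2: "((A * K2 + B) * k + C) mod (K2 * k) = B * k + C"
      "((A * K2 + B) * k + C) div (K2 * k) = A"
      unfolding c2 using dm[OF bkc, of A] by simp_all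
    define l where "l = ((B * k + C) * k + A) * Q2 + D"
    have lb: "l < (K2 * k) * (k * Q2)" using l_def jb jeq e1
    proof -
      have "A * Q2 + D < k * Q2"
      proof -
        have "A * Q2 + D < A * Q2 + Q2" using D by simp
        also have "\<dots> = (A + 1) * Q2" by simp
        also have "\<dots> \<le> k * Q2" using A by (intro mult_right_mono) auto
        finally show ?thesis .
      qed
      then have "l < (B * k + C) * (k * Q2) + k * Q2" unfolding l_def by (simp add: algebra_simps)
      also have "\<dots> = (B * k + C + 1) * (k * Q2)" by simp
      also have "\<dots> \<le> (K2 * k) * (k * Q2)" using bkc by (intro mult_right_mono) auto
      finally show ?thesis .
    qed
    have aqd: "A * Q2 + D < k * Q2"
    proof -
      have "A * Q2 + D < A * Q2 + Q2" using D by simp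
      also have "\<dots> = (A + 1) * Q2" by simp
      also have "\<dots> \<le> k * Q2" using A by (intro mult_right_mono) auto
      finally show ?thesis .
    qed
    have l2: "l = (B * k + C) * (k * Q2) + (A * Q2 + D)" unfolding l_def by (simp add: algebra_simps)
    have ld: "l div (k * Q2) = B * k + C" "l mod (k * Q2) = A * Q2 + D"
      unfolding l2 using dm[OF aqd, of "B * k + C"] by simp_all
    have bm: "(B * k + C) mod k = C" "(B * k + C) div k = B" using C by simp_all
    have "R $$ (0, j) = S $$ (0, l)"
      using R jb e2 jd m2 unfolding l_def by simp
    also have "\<dots> = V 1 $$ (0, (C * K2 + B) * (k * Q2) + (A * Q2 + D))"
      using S lb ld bm by simp
    also have "(C * K2 + B) * (k * Q2) + (A * Q2 + D) = idx k zs"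
      unfolding zeq by (simp add: algebra_simps)
    finally have "R $$ (0, j) = V 1 $$ (0, idx k zs)" .
    then show "V i $$ (r, j) = (- R) $$ (r, j)"
      using r0 R jb e2 ci c1 cyz by simp
  qed
qed

end
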